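(* Assume (A1)–(A3). At iteration $\ell$ of the Adaptive Trajectory Bundle Method, let $(\alpha^*,s^*,w^*,\{d_j^*\})$ be an optimal solution of the subproblem (P) built from the sample set $\mathcal Y^\ell$ with penalties $(\mu^\ell,\boldsymbol\gamma^\ell)$, let $J_{\rm sub}^*$ be its optimal value and $z^+=\{(W_x^{(k)}\alpha^{(k)*},W_u^{(k)}\alpha^{(k)*})\}_{k=1}^H$ the recovered trajectory. Then, with $C_{\rm approx}=2$, $$\big|\phi_{\mu^\ell,\boldsymbol\gamma^\ell}(z^+)-J_{\rm sub}^*\big|\le C_{\rm approx}\,L_\phi(\mu^\ell,\boldsymbol\gamma^\ell)\,\Delta^\ell,$$ where $L_\phi(\mu,\boldsymbol\gamma)=2HRL_r+(H-1)\mu(1+L_F+L_c)+(H-1)L_c\sum_{j=1}^J\gamma_j$.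
   Context: Fix integers $H\ge 2$, $n_x,n_u,n_r,n_{\rm hard}\ge 1$, $J\ge 0$, $n_1,\dots,n_J\ge1$, $m\ge1$. A trajectory is $z=\{(x_k,u_k)\}_{k=1}^H$, $x_k\in\mathbb R^{n_x}$, $u_k\in\mathbb R^{n_u}$, with norm $\|z\|=(\sum_k\|x_k\|^2+\|u_k\|^2)^{1/2}$; $B(z,\Delta)$ is the closed ball. Given maps $F:\mathbb R^{n_x}\times\mathbb R^{n_u}\to\mathbb R^{n_x}$, $r_k\to\mathbb R^{n_r}$, $c_{{\rm hard},k}\to\mathbb R^{n_{\rm hard}}$, $c_{j,k}\to\mathbb R^{n_j}$ ($k=1,\dots,H$, $j=1,\dots,J$), constraints meaning $c\ge0$; $c_k=(c_{{\rm hard},k},c_{1,k},\dots,c_{J,k})$. $[v]_-=\max(0,-v)$, $[v]_+=\max(0,v)$ elementwise; $\Delta^{m-1}$ is the probability simplex in $\mathbb R^m$. Penalized objective: $\phi_{\mu,\boldsymbol\gamma}(z)=\sum_{k=1}^H\|r_k(x_k,u_k)\|_2^2+\mu\sum_{k=1}^{H-1}\big(\|x_{k+1}-F(x_k,u_k)\|_1+\|[c_{{\rm hard},k}(x_k,u_k)]_-\|_1\big)+\sum_{j=1}^J\gamma_j\sum_{k=1}^{H-1}\|[c_{j,k}(x_k,u_k)]_-\|_1$. Subproblem (P): given sample trajectories $y_i=\{(x_i^{(k)},u_i^{(k)})\}_{k=1}^H$, $i=1,\dots,m$, set $W_x^{(k)}=[x_1^{(k)}\cdots x_m^{(k)}]$,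 $W_u^{(k)}=[u_1^{(k)}\cdots u_m^{(k)}]$, $W_f^{(k)}=[F(x_i^{(k)},u_i^{(k)})]_i$, $W_r^{(k)}=[r_k(x_i^{(k)},u_i^{(k)})]_i$, $W_{c,{\rm hard}}^{(k)}=[c_{{\rm hard},k}(x_i^{(k)},u_i^{(k)})]_i$, $W_{c,j}^{(k)}=[c_{j,k}(x_i^{(k)},u_i^{(k)})]_i$. (P) minimizes $J_{\rm sub}=\sum_{k=1}^H\|W_r^{(k)}\alpha^{(k)}\|_2^2+\mu\sum_{k=1}^{H-1}(\|s_k\|_1+\|w_k\|_1)+\sum_j\gamma_j\sum_{k=1}^{H-1}\|d_{k,j}\|_1$ over $\alpha^{(k)}\in\Delta^{m-1}$ ($k=1..H$), $s_k\in\mathbb R^{n_x}$, $w_k\ge0$, $d_{k,j}\ge0$ ($k=1..H-1$) subject to $W_f^{(k)}\alpha^{(k)}=W_x^{(k+1)}\alpha^{(k+1)}+s_k$, $W_{c,{\rm hard}}^{(k)}\alpha^{(k)}+w_k\ge0$, $W_{c,j}^{(k)}\alpha^{(k)}+d_{k,j}\ge0$. Adaptive Trajectory Bundle Method: starting from $z^0$, $\Delta^0,\mu^0,\boldsymbol\gamma^0>0$, at iteration $\ell$ choose samples $\mathcal Y^\ell=\{y_1,\dots,y_m\}\subset B(z^\ell,\Delta^\ell)$, solve (P) with $(\mu^\ell,\boldsymbol\gamma^\ell)$, and set $z^{\ell+1}=\{(W_x^{(k)}\alpha^{(k)*},W_u^{(k)}\alpha^{(k)*})\}_k$ (always accepted);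 violation metrics $\nu_{\rm dyn}^\ell=\max_{k\le H-1}\|s_k^*\|_\infty$, $\nu_{\rm hard}^\ell=\max_{k\le H-1}\|w_k^*\|_\infty$, $\nu_j^\ell=\sum_{k=1}^{H-1}\|d_{k,j}^*\|_1$; then $\Delta^{\ell+1}=\min(\beta_{\exp}\Delta^\ell,\Delta_{\max})$ if $\nu_{\rm dyn}^\ell<\tau_{\rm feas}$ and $\nu_{\rm hard}^\ell<\tau_{\rm feas}$, $\Delta^{\ell+1}=\max(\beta_{\rm con}\Delta^\ell,\Delta_{\min})$ if $\nu_{\rm dyn}^\ell>\tau_{\rm viol}$ or $\nu_{\rm hard}^\ell>\tau_{\rm viol}$, else $\Delta^{\ell+1}=\Delta^\ell$; $\mu^{\ell+1}=\min(\rho_\mu\mu^\ell,\mu_{\max})$ if $\nu_{\rm dyn}^\ell>\tau_{\rm viol}$ or $\nu_{\rm hard}^\ell>\tau_{\rm viol}$, else $\mu^\ell$; $\gamma_j^{\ell+1}=\min(\rho_\gamma\gamma_j^\ell,\gamma_{j,\max})$ if $\nu_j^\ell>\tau_j$, else $\gamma_j^\ell$. Parameters: $\beta_{\exp}>1>\beta_{\rm con}>0$, $0<\Delta_{\min}\le\Delta_{\max}$, $0<\tau_{\rm feas}<\tau_{\rm viol}$, $\tau_j>0$, $\rho_\mu,\rho_\gamma>1$. (A1) $r_k,F,c_k$ Lipschitz with constants $L_r,L_F,L_c$. (A2) For all $\mu\le\mu_{\max},\gamma_j\le\gamma_{j,\max}$ the level set $\mathcal L(\mu,\boldsymbol\gamma)=\{z:\phi_{\mu,\boldsymbol\gamma}(z)\le\phi_{\mu,\boldsymbol\gamma}(z^0)\}$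 is compact and $\|r_k(x_k,u_k)\|\le R$ on it for all $k$ (this bound $R$ is used for all residuals evaluated in the analysis). (A3) Each $\mathcal Y^\ell$ satisfies: (i) $y_i\in B(z^\ell,\Delta^\ell)$ for all $i$; (ii) $z^\ell\in\mathcal Y^\ell$; (iii) there is $\kappa>0$ independent of $\ell$ such that for every unit direction $d$ some $y_i$ has $\langle y_i-z^\ell,d\rangle\ge\kappa\Delta^\ell$. *)

theory Defs
  imports "HOL-Analysis.Analysis"
begin

text \<open>Stage states (x_k,u_k) live in real^'nx \<times> real^'nu, whose norm is
 sqrt(|x|^2+|u|^2).  A trajectory is a map z :: nat \<Rightarrow> stage, only the
 indices k = 1..H are relevant.  Soft-constraint family j has dimension nj j and
 its values are represented as nat \<Rightarrow> real, components 0..nj j - 1.\<close>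

type_synonym ('nx,'nu) stage = "(real^('nx::finite)) \<times> (real^('nu::finite))"
type_synonym ('nx,'nu) traj = "nat \<Rightarrow> ('nx,'nu) stage"

definition l1 :: "real^('n::finite) \<Rightarrow> real" where
  "l1 v = (\<Sum>i\<in>UNIV. \<bar>v $ i\<bar>)"

definition linf :: "real^('n::finite) \<Rightarrow> real" where
  "linf v = Max ((\<lambda>i. \<bar>v $ i\<bar>) ` UNIV)"

definition negl1 :: "real^('n::finite) \<Rightarrow> real" where
  "negl1 v = (\<Sum>i\<in>UNIV. max 0 (- (v $ i)))"

definition traj_norm :: "nat \<Rightarrow> ('nx::finite,'nu::finite) traj \<Rightarrow> real" where
  "traj_norm H z = sqrt (\<Sum>k=1..H. (norm (z k))\<^sup>2)"

definition traj_inner :: "nat \<Rightarrow> ('nx::finite,'nu::finite) traj \<Rightarrow> ('nx,'nu) traj \<Rightarrow> real" where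
  "traj_inner H z y = (\<Sum>k=1..H. inner (z k) (y k))"

definition phi ::
  "nat \<Rightarrow> nat \<Rightarrow> (nat \<Rightarrow> nat)
   \<Rightarrow> (('nx::finite,'nu::finite) stage \<Rightarrow> real^'nx)
   \<Rightarrow> (nat \<Rightarrow> ('nx,'nu) stage \<Rightarrow> real^('nr::finite))
   \<Rightarrow> (nat \<Rightarrow> ('nx,'nu) stage \<Rightarrow> real^('nh::finite))
   \<Rightarrow> (nat \<Rightarrow> nat \<Rightarrow> ('nx,'nu) stage \<Rightarrow> (nat \<Rightarrow> real))
   \<Rightarrow> real \<Rightarrow> (nat \<Rightarrow> real) \<Rightarrow> ('nx,'nu) traj \<Rightarrow> real" where
  "phi H J nj F r ch cj \<mu> \<gamma> z =
     (\<Sum>k=1..H. (norm (r k (z k)))\<^sup>2)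
     + \<mu> * (\<Sum>k=1..H-1. l1 (fst (z (k+1)) - F (z k)) + negl1 (ch k (z k)))
     + (\<Sum>j=1..J. \<gamma> j * (\<Sum>k=1..H-1. \<Sum>l<nj j. max 0 (- cj j k (z k) l)))"

text \<open>Subproblem (P).  Samples Y i (i = 1..m), weights \<alpha> k i (stage k, sample i),
  slacks s k, w k, d k j l.\<close>
definition sub_feasible ::
  "nat \<Rightarrow> nat \<Rightarrow> nat \<Rightarrow> (nat \<Rightarrow> nat)
   \<Rightarrow> (('nx::finite,'nu::finite) stage \<Rightarrow> real^'nx)
   \<Rightarrow> (nat \<Rightarrow> ('nx,'nu) stage \<Rightarrow> real^('nh::finite))
   \<Rightarrow> (nat \<Rightarrow> nat \<Rightarrow> ('nx,'nu) stage \<Rightarrow> (nat \<Rightarrow> real))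
   \<Rightarrow> (nat \<Rightarrow> ('nx,'nu) traj)
   \<Rightarrow> (nat \<Rightarrow> nat \<Rightarrow> real) \<Rightarrow> (nat \<Rightarrow> real^'nx) \<Rightarrow> (nat \<Rightarrow> real^'nh)
   \<Rightarrow> (nat \<Rightarrow> nat \<Rightarrow> nat \<Rightarrow> real) \<Rightarrow> bool" where
  "sub_feasible H m J nj F ch cj Y \<alpha> s w d \<longleftrightarrow>
     (\<forall>k\<in>{1..H}. (\<forall>i\<in>{1..m}. 0 \<le> \<alpha> k i) \<and> (\<Sum>i=1..m. \<alpha> k i) = 1) \<and>
     (\<forall>k\<in>{1..H-1}. (\<Sum>i=1..m. \<alpha> k i *\<^sub>R F (Y i k))
                      = (\<Sum>i=1..m. \<alpha> (k+1) i *\<^sub>R fst (Y i (k+1))) + s k) \<and>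
     (\<forall>k\<in>{1..H-1}. \<forall>l. 0 \<le> w k $ l \<and>
                      0 \<le> (\<Sum>i=1..m. \<alpha> k i *\<^sub>R ch k (Y i k)) $ l + w k $ l) \<and>
     (\<forall>k\<in>{1..H-1}. \<forall>j\<in>{1..J}. \<forall>l<nj j. 0 \<le> d k j l \<and>
                      0 \<le> (\<Sum>i=1..m. \<alpha> k i * cj j k (Y i k) l) + d k j l)"

definition sub_obj ::
  "nat \<Rightarrow> nat \<Rightarrow> nat \<Rightarrow> (nat \<Rightarrow> nat)
   \<Rightarrow> (nat \<Rightarrow> ('nx::finite,'nu::finite) stage \<Rightarrow> real^('nr::finite))
   \<Rightarrow> real \<Rightarrow> (nat \<Rightarrow> real) \<Rightarrow> (nat \<Rightarrow> ('nx,'nu) traj)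
   \<Rightarrow> (nat \<Rightarrow> nat \<Rightarrow> real) \<Rightarrow> (nat \<Rightarrow> real^'nx) \<Rightarrow> (nat \<Rightarrow> real^('nh::finite))
   \<Rightarrow> (nat \<Rightarrow> nat \<Rightarrow> nat \<Rightarrow> real) \<Rightarrow> real" where
  "sub_obj H m J nj r \<mu> \<gamma> Y \<alpha> s w d =
     (\<Sum>k=1..H. (norm (\<Sum>i=1..m. \<alpha> k i *\<^sub>R r k (Y i k)))\<^sup>2)
     + \<mu> * (\<Sum>k=1..H-1. l1 (s k) + l1 (w k))
     + (\<Sum>j=1..J. \<gamma> j * (\<Sum>k=1..H-1. \<Sum>l<nj j. \<bar>d k j l\<bar>))"

definition sub_optimal where
  "sub_optimal H m J nj F r ch cj \<mu> \<gamma> Y \<alpha> s w d \<longleftrightarrow>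
     sub_feasible H m J nj F ch cj Y \<alpha> s w d \<and>
     (\<forall>\<alpha>' s' w' d'. sub_feasible H m J nj F ch cj Y \<alpha>' s' w' d' \<longrightarrow>
        sub_obj H m J nj r \<mu> \<gamma> Y \<alpha> s w d \<le> sub_obj H m J nj r \<mu> \<gamma> Y \<alpha>' s' w' d')"

definition recover :: "nat \<Rightarrow> (nat \<Rightarrow> ('nx::finite,'nu::finite) traj) \<Rightarrow> (nat \<Rightarrow> nat \<Rightarrow> real) \<Rightarrow> ('nx,'nu) traj" where
  "recover m Y \<alpha> = (\<lambda>k. \<Sum>i=1..m. \<alpha> k i *\<^sub>R Y i k)"

definition nu_dyn :: "nat \<Rightarrow> (nat \<Rightarrow> real^('nx::finite)) \<Rightarrow> real" where
  "nu_dyn H s = Max ((\<lambda>k. linf (s k)) ` {1..H-1})"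
definition nu_hard :: "nat \<Rightarrow> (nat \<Rightarrow> real^('nh::finite)) \<Rightarrow> real" where
  "nu_hard H w = Max ((\<lambda>k. linf (w k)) ` {1..H-1})"
definition nu_soft :: "nat \<Rightarrow> (nat \<Rightarrow> nat) \<Rightarrow> (nat \<Rightarrow> nat \<Rightarrow> nat \<Rightarrow> real) \<Rightarrow> nat \<Rightarrow> real" where
  "nu_soft H nj d j = (\<Sum>k=1..H-1. \<Sum>l<nj j. \<bar>d k j l\<bar>)"

definition atbm_run where
  "atbm_run H m J nj F r ch cj z0 \<Delta>0 \<mu>0 \<gamma>0
     \<beta>exp \<beta>con \<Delta>min \<Delta>max \<tau>feas \<tau>viol \<tau> \<rho>\<mu> \<rho>\<gamma> \<mu>max \<gamma>max
     zs \<Delta>s \<mu>s \<gamma>s Ys \<alpha>s ss ws ds \<longleftrightarrow>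
   zs 0 = z0 \<and> \<Delta>s 0 = \<Delta>0 \<and> \<mu>s 0 = \<mu>0 \<and> \<gamma>s 0 = \<gamma>0 \<and>
   (\<forall>t.
     sub_optimal H m J nj F r ch cj (\<mu>s t) (\<gamma>s t) (Ys t) (\<alpha>s t) (ss t) (ws t) (ds t) \<and>
     zs (Suc t) = recover m (Ys t) (\<alpha>s t) \<and>
     (let nd = nu_dyn H (ss t); nh = nu_hard H (ws t) in
       \<Delta>s (Suc t) =
         (if nd < \<tau>feas \<and> nh < \<tau>feas then min (\<beta>exp * \<Delta>s t) \<Delta>max
          else if \<tau>viol < nd \<or> \<tau>viol < nh then max (\<beta>con * \<Delta>s t) \<Delta>min
          else \<Delta>s t) \<and>
       \<mu>s (Suc t) =
         (if \<tau>viol < nd \<or> \<tau>viol < nh then min (\<rho>\<mu> * \<mu>s t) \<mu>max else \<mu>s t)) \<and>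
     (\<forall>j\<in>{1..J}. \<gamma>s (Suc t) j =
         (if \<tau> j < nu_soft H nj (ds t) j then min (\<rho>\<gamma> * \<gamma>s t j) (\<gamma>max j)
          else \<gamma>s t j)))"

end

theory Submission
  imports Defs
begin

lemma l1_add: "l1 (a + b) \<le> l1 a + l1 b"
  unfolding l1_def by (simp add: sum.distrib[symmetric] sum_mono abs_triangle_ineq)

lemma l1_scale: "l1 (c *\<^sub>R a) = \<bar>c\<bar> * l1 a"
  unfolding l1_def by (simp add: sum_distrib_left abs_mult)

lemma l1_zero: "l1 0 = 0" unfolding l1_def by simp

lemma l1_nonneg: "0 \<le> l1 a" unfolding l1_def by (simp add: sum_nonneg)

lemma l1_minus: "l1 (- a) = l1 a" unfolding l1_def by simp

lemma l1_commute: "l1 (a - b) = l1 (b - a)"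
  by (metis l1_minus minus_diff_eq)

lemma l1_diff: "\<bar>l1 a - l1 b\<bar> \<le> l1 (a - b)"
proof -
  have "l1 a \<le> l1 (a - b) + l1 b" using l1_add[of "a - b" b] by simp
  moreover have "l1 b \<le> l1 (b - a) + l1 a" using l1_add[of "b - a" a] by simp
  ultimately show ?thesis using l1_commute[of a b] by linarith
qed

lemma negl1_diff: "\<bar>negl1 a - negl1 b\<bar> \<le> l1 (a - b)"
proof -
  have "\<bar>negl1 a - negl1 b\<bar> = \<bar>\<Sum>i\<in>UNIV. max 0 (- (a $ i)) - max 0 (- (b $ i))\<bar>"
    unfolding negl1_def by (simp add: sum_subtractf)
  also have "\<dots> \<le> (\<Sum>i\<in>UNIV. \<bar>max 0 (- (a $ i)) - max 0 (- (b $ i))\<bar>)" by (rule sum_abs)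
  also have "\<dots> \<le> (\<Sum>i\<in>UNIV. \<bar>(a - b) $ i\<bar>)" by (rule sum_mono) auto
  finally show ?thesis unfolding l1_def .
qed

lemma conv_N:
  fixes N :: "'a::real_vector \<Rightarrow> real"
  assumes fin: "finite A" and a0: "\<forall>i\<in>A. 0 \<le> \<alpha> i" and a1: "sum \<alpha> A = 1"
    and vb: "\<forall>i\<in>A. N (v i) \<le> B"
    and sub: "\<And>x y. N (x + y) \<le> N x + N y"
    and hom: "\<And>c x. 0 \<le> c \<Longrightarrow> N (c *\<^sub>R x) = c * N x" and z: "N 0 = 0"
  shows "N (\<Sum>i\<in>A. \<alpha> i *\<^sub>R v i) \<le> B"
proof -
  have "N (\<Sum>i\<in>A. \<alpha> i *\<^sub>R v i) \<le> (\<Sum>i\<in>A. N (\<alpha> i *\<^sub>R v i))"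
    using fin
  proof (induction A rule: finite_induct)
    case empty then show ?case by (simp add: z)
  next
    case (insert x F)
    then show ?case using sub[of "\<alpha> x *\<^sub>R v x" "\<Sum>i\<in>F. \<alpha> i *\<^sub>R v i"] by simp
  qed
  also have "\<dots> = (\<Sum>i\<in>A. \<alpha> i * N (v i))" using a0 hom by (intro sum.cong) auto
  also have "\<dots> \<le> (\<Sum>i\<in>A. \<alpha> i * B)" using a0 vb by (intro sum_mono mult_left_mono) auto
  also have "\<dots> = B" using a1 by (simp add: sum_distrib_right[symmetric])
  finally show ?thesis .
qed

lemma conv_sub:
  fixes v :: "'a::real_vector"
  assumes "sum \<alpha> A = 1"
  shows "v - (\<Sum>i\<in>A. \<alpha> i *\<^sub>R u i) = (\<Sum>i\<in>A. \<alpha> i *\<^sub>R (v - u i))"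
  using assms by (simp add: scaleR_diff_right sum_subtractf scaleR_sum_left[symmetric])

lemma conv_norm:
  fixes v :: "'i \<Rightarrow> 'a::real_normed_vector"
  assumes "finite A" "\<forall>i\<in>A. 0 \<le> \<alpha> i" "sum \<alpha> A = 1" "\<forall>i\<in>A. norm (v i) \<le> B"
  shows "norm (\<Sum>i\<in>A. \<alpha> i *\<^sub>R v i) \<le> B"
  by (rule conv_N[where N=norm]) (use assms in \<open>auto simp: norm_triangle_ineq\<close>)

lemma conv_l1:
  assumes "finite A" "\<forall>i\<in>A. 0 \<le> \<alpha> i" "sum \<alpha> A = 1" "\<forall>i\<in>A. l1 (v i) \<le> B"
  shows "l1 (\<Sum>i\<in>A. \<alpha> i *\<^sub>R v i) \<le> B"
  by (rule conv_N[where N=l1]) (use assms in \<open>auto simp: l1_add l1_scale l1_zero\<close>)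

lemma conv_scalar:
  fixes x :: "nat \<Rightarrow> real"
  assumes fin: "finite A" and a0: "\<forall>i\<in>A. 0 \<le> \<alpha> i" and a1: "sum \<alpha> A = 1"
    and b: "\<forall>i\<in>A. (\<Sum>l<n. \<bar>x l - y i l\<bar>) \<le> B"
  shows "(\<Sum>l<n. \<bar>x l - (\<Sum>i\<in>A. \<alpha> i * y i l)\<bar>) \<le> B"
proof -
  have "(\<Sum>l<n. \<bar>x l - (\<Sum>i\<in>A. \<alpha> i * y i l)\<bar>) = (\<Sum>l<n. \<bar>\<Sum>i\<in>A. \<alpha> i * (x l - y i l)\<bar>)"
    using conv_sub[OF a1, of "x l" "\<lambda>i. y i l" for l] by simp
  also have "\<dots> \<le> (\<Sum>l<n. \<Sum>i\<in>A. \<alpha> i * \<bar>x l - y i l\<bar>)"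
    by (intro sum_mono order.trans[OF sum_abs]) (use a0 in \<open>auto simp: abs_mult\<close>)
  also have "\<dots> = (\<Sum>i\<in>A. \<alpha> i * (\<Sum>l<n. \<bar>x l - y i l\<bar>))"
    by (simp add: sum.swap[of _ "{..<n}"] sum_distrib_left)
  also have "\<dots> \<le> (\<Sum>i\<in>A. \<alpha> i * B)" using a0 b by (intro sum_mono mult_left_mono) auto
  also have "\<dots> = B" using a1 by (simp add: sum_distrib_right[symmetric])
  finally show ?thesis .
qed

lemma stage_le_traj:
  assumes "k \<in> {1..H}"
  shows "norm (z k) \<le> traj_norm H z"
proof -
  have "(norm (z k))\<^sup>2 \<le> (\<Sum>k=1..H. (norm (z k))\<^sup>2)"
    using assms by (intro member_le_sum) auto
  then show ?thesis unfolding traj_norm_def by (simp add: real_le_rsqrt)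
qed


lemma opt_mu_nonneg:
  fixes w :: "nat \<Rightarrow> real^'nh::finite"
  assumes opt: "sub_optimal H m J nj F r ch cj \<mu> \<gamma> Y \<alpha> s w d" and H: "2 \<le> H"
  shows "0 \<le> \<mu>"
proof (rule ccontr)
  assume neg: "\<not> 0 \<le> \<mu>"
  define w2 where "w2 = (\<lambda>k. w k + (\<chi> l. 1))"
  have feas: "sub_feasible H m J nj F ch cj Y \<alpha> s w d" using opt unfolding sub_optimal_def by blast
  then have w0: "\<forall>k\<in>{1..H-1}. \<forall>l. 0 \<le> w k $ l" unfolding sub_feasible_def by blast
  have w0': "\<forall>k\<in>{1..H-1}. \<forall>l. 0 \<le> w k $ l \<and> 0 \<le> (\<Sum>i=1..m. \<alpha> k i *\<^sub>R ch k (Y i k)) $ l + w k $ l"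
    using feas unfolding sub_feasible_def by blast
  have w2ok: "\<forall>k\<in>{1..H-1}. \<forall>l. 0 \<le> w2 k $ l \<and> 0 \<le> (\<Sum>i=1..m. \<alpha> k i *\<^sub>R ch k (Y i k)) $ l + w2 k $ l"
  proof (intro ballI allI)
    fix k l assume k: "k \<in> {1..H-1}"
    have a: "0 \<le> w k $ l" "0 \<le> (\<Sum>i=1..m. \<alpha> k i *\<^sub>R ch k (Y i k)) $ l + w k $ l"
      using w0' k by blast+
    have b: "w2 k $ l = w k $ l + 1" unfolding w2_def by simp
    show "0 \<le> w2 k $ l \<and> 0 \<le> (\<Sum>i=1..m. \<alpha> k i *\<^sub>R ch k (Y i k)) $ l + w2 k $ l"
      unfolding b using a by linarith
  qed
  have feas2: "sub_feasible H m J nj F ch cj Y \<alpha> s w2 d"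
    using feas w2ok unfolding sub_feasible_def by blast
  have le: "sub_obj H m J nj r \<mu> \<gamma> Y \<alpha> s w d \<le> sub_obj H m J nj r \<mu> \<gamma> Y \<alpha> s w2 d"
    using opt feas2 unfolding sub_optimal_def by blast
  have l1w2: "l1 (w2 k) = l1 (w k) + real CARD('nh)" if "k \<in> {1..H-1}" for k
  proof -
    have "l1 (w2 k) = (\<Sum>l\<in>UNIV. w k $ l + 1)"
      unfolding l1_def w2_def using w0 that by (intro sum.cong) auto
    also have "\<dots> = l1 (w k) + real CARD('nh)"
      unfolding l1_def using w0 that by (simp add: sum.distrib)
    finally show ?thesis .
  qed
  have "(\<Sum>k=1..H-1. l1 (s k) + l1 (w2 k)) = (\<Sum>k=1..H-1. (l1 (s k) + l1 (w k)) + real CARD('nh))"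
    using l1w2 by (intro sum.cong) auto
  also have "\<dots> = (\<Sum>k=1..H-1. l1 (s k) + l1 (w k)) + real (H - 1) * real CARD('nh)"
    by (simp add: sum.distrib)
  finally have eq: "(\<Sum>k=1..H-1. l1 (s k) + l1 (w2 k)) = (\<Sum>k=1..H-1. l1 (s k) + l1 (w k)) + real (H - 1) * real CARD('nh)" .
  have pos: "0 < real (H - 1) * real CARD('nh)" using H by simp
  from le have "\<mu> * (\<Sum>k=1..H-1. l1 (s k) + l1 (w k)) \<le> \<mu> * (\<Sum>k=1..H-1. l1 (s k) + l1 (w2 k))"
    unfolding sub_obj_def by simp
  with eq have "0 \<le> \<mu> * (real (H - 1) * real CARD('nh))" by (simp add: algebra_simps)
  with pos neg mult_neg_pos[of \<mu> "real (H - 1) * real CARD('nh)"] show False by linarith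
qed

lemma opt_gamma_nonneg:
  assumes opt: "sub_optimal H m J nj F r ch cj \<mu> \<gamma> Y \<alpha> s w d" and H: "2 \<le> H"
    and nj: "\<forall>j\<in>{1..J}. 1 \<le> nj j" and j0: "j0 \<in> {1..J}"
  shows "0 \<le> \<gamma> j0"
proof (rule ccontr)
  assume neg: "\<not> 0 \<le> \<gamma> j0"
  define d2 where "d2 = (\<lambda>k j l. d k j l + (if j = j0 then 1 else 0::real))"
  have feas: "sub_feasible H m J nj F ch cj Y \<alpha> s w d" using opt unfolding sub_optimal_def by blast
  then have d0: "\<forall>k\<in>{1..H-1}. \<forall>j\<in>{1..J}. \<forall>l<nj j. 0 \<le> d k j l" unfolding sub_feasible_def by blast
  have d0': "\<forall>k\<in>{1..H-1}. \<forall>j\<in>{1..J}. \<forall>l<nj j. 0 \<le> d k j l \<and> 0 \<le> (\<Sum>i=1..m. \<alpha> k i * cj j k (Y i k) l) + d k j l"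
    using feas unfolding sub_feasible_def by blast
  have d2ok: "\<forall>k\<in>{1..H-1}. \<forall>j\<in>{1..J}. \<forall>l<nj j. 0 \<le> d2 k j l \<and> 0 \<le> (\<Sum>i=1..m. \<alpha> k i * cj j k (Y i k) l) + d2 k j l"
  proof (intro ballI allI impI)
    fix k j l assume k: "k \<in> {1..H-1}" and j: "j \<in> {1..J}" and l: "l < nj j"
    have a: "0 \<le> d k j l" "0 \<le> (\<Sum>i=1..m. \<alpha> k i * cj j k (Y i k) l) + d k j l"
      using d0' k j l by blast+
    have b: "0 \<le> (if j = j0 then 1 else 0::real)" by simp
    show "0 \<le> d2 k j l \<and> 0 \<le> (\<Sum>i=1..m. \<alpha> k i * cj j k (Y i k) l) + d2 k j l"
      unfolding d2_def using a b by linarith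
  qed
  have feas2: "sub_feasible H m J nj F ch cj Y \<alpha> s w d2"
    using feas d2ok unfolding sub_feasible_def by blast
  have le: "sub_obj H m J nj r \<mu> \<gamma> Y \<alpha> s w d \<le> sub_obj H m J nj r \<mu> \<gamma> Y \<alpha> s w d2"
    using opt feas2 unfolding sub_optimal_def by blast
  have inner: "(\<Sum>k=1..H-1. \<Sum>l<nj j. \<bar>d2 k j l\<bar>) = (\<Sum>k=1..H-1. \<Sum>l<nj j. \<bar>d k j l\<bar>)
      + (if j = j0 then real (H - 1) * real (nj j) else 0)" if "j \<in> {1..J}" for j
  proof -
    have "(\<Sum>k=1..H-1. \<Sum>l<nj j. \<bar>d2 k j l\<bar>) = (\<Sum>k=1..H-1. \<Sum>l<nj j. \<bar>d k j l\<bar> + (if j = j0 then 1 else 0))"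
      using d0 that unfolding d2_def by (intro sum.cong) auto
    also have "\<dots> = (\<Sum>k=1..H-1. \<Sum>l<nj j. \<bar>d k j l\<bar>) + (if j = j0 then real (H - 1) * real (nj j) else 0)"
      by (simp add: sum.distrib)
    finally show ?thesis .
  qed
  have "(\<Sum>j=1..J. \<gamma> j * (\<Sum>k=1..H-1. \<Sum>l<nj j. \<bar>d2 k j l\<bar>)) =
        (\<Sum>j=1..J. \<gamma> j * (\<Sum>k=1..H-1. \<Sum>l<nj j. \<bar>d k j l\<bar>) + (if j = j0 then \<gamma> j * (real (H - 1) * real (nj j)) else 0))"
    using inner by (intro sum.cong) (auto simp: algebra_simps)
  also have "\<dots> = (\<Sum>j=1..J. \<gamma> j * (\<Sum>k=1..H-1. \<Sum>l<nj j. \<bar>d k j l\<bar>)) + \<gamma> j0 * (real (H - 1) * real (nj j0))"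
    using j0 by (simp add: sum.distrib)
  finally have eq: "(\<Sum>j=1..J. \<gamma> j * (\<Sum>k=1..H-1. \<Sum>l<nj j. \<bar>d2 k j l\<bar>)) =
     (\<Sum>j=1..J. \<gamma> j * (\<Sum>k=1..H-1. \<Sum>l<nj j. \<bar>d k j l\<bar>)) + \<gamma> j0 * (real (H - 1) * real (nj j0))" .
  have "1 \<le> nj j0" using nj j0 by blast
  then have pos: "0 < real (H - 1) * real (nj j0)" using H by simp
  from le eq have "0 \<le> \<gamma> j0 * (real (H - 1) * real (nj j0))" unfolding sub_obj_def by simp
  with pos neg mult_neg_pos[of "\<gamma> j0" "real (H - 1) * real (nj j0)"] show False by linarith
qed

lemma opt_eq:
  fixes w :: "nat \<Rightarrow> real^'nh::finite"
  assumes opt: "sub_optimal H m J nj F r ch cj \<mu> \<gamma> Y \<alpha> s w d" and H: "2 \<le> H"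
    and nj: "\<forall>j\<in>{1..J}. 1 \<le> nj j"
  shows "\<mu> * (\<Sum>k=1..H-1. l1 (s k) + l1 (w k)) + (\<Sum>j=1..J. \<gamma> j * (\<Sum>k=1..H-1. \<Sum>l<nj j. \<bar>d k j l\<bar>))
    = \<mu> * (\<Sum>k=1..H-1. l1 (s k) + negl1 (\<Sum>i=1..m. \<alpha> k i *\<^sub>R ch k (Y i k)))
      + (\<Sum>j=1..J. \<gamma> j * (\<Sum>k=1..H-1. \<Sum>l<nj j. max 0 (- (\<Sum>i=1..m. \<alpha> k i * cj j k (Y i k) l))))"
proof -
  define w2 where "w2 = (\<lambda>k. \<chi> l. max 0 (- ((\<Sum>i=1..m. \<alpha> k i *\<^sub>R ch k (Y i k)) $ l)))"
  define d2 where "d2 = (\<lambda>k j l. max 0 (- (\<Sum>i=1..m. \<alpha> k i * cj j k (Y i k) l)))"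
  have mu: "0 \<le> \<mu>" by (rule opt_mu_nonneg[OF opt H])
  have ga: "\<forall>j\<in>{1..J}. 0 \<le> \<gamma> j" using opt_gamma_nonneg[OF opt H nj] by blast
  have feas: "sub_feasible H m J nj F ch cj Y \<alpha> s w d" using opt unfolding sub_optimal_def by blast
  then have w0: "\<forall>k\<in>{1..H-1}. \<forall>l. 0 \<le> w k $ l \<and> 0 \<le> (\<Sum>i=1..m. \<alpha> k i *\<^sub>R ch k (Y i k)) $ l + w k $ l"
    and d0: "\<forall>k\<in>{1..H-1}. \<forall>j\<in>{1..J}. \<forall>l<nj j. 0 \<le> d k j l \<and> 0 \<le> (\<Sum>i=1..m. \<alpha> k i * cj j k (Y i k) l) + d k j l"
    unfolding sub_feasible_def by blast+
  have w2ok: "\<forall>k\<in>{1..H-1}. \<forall>l. 0 \<le> w2 k $ l \<and> 0 \<le> (\<Sum>i=1..m. \<alpha> k i *\<^sub>R ch k (Y i k)) $ l + w2 k $ l"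
  proof (intro ballI allI)
    fix k l assume k: "k \<in> {1..H-1}"
    have b: "w2 k $ l = max 0 (- ((\<Sum>i=1..m. \<alpha> k i *\<^sub>R ch k (Y i k)) $ l))" unfolding w2_def by simp
    show "0 \<le> w2 k $ l \<and> 0 \<le> (\<Sum>i=1..m. \<alpha> k i *\<^sub>R ch k (Y i k)) $ l + w2 k $ l"
      unfolding b by linarith
  qed
  have d2ok: "\<forall>k\<in>{1..H-1}. \<forall>j\<in>{1..J}. \<forall>l<nj j. 0 \<le> d2 k j l \<and> 0 \<le> (\<Sum>i=1..m. \<alpha> k i * cj j k (Y i k) l) + d2 k j l"
    unfolding d2_def by auto
  have feas2: "sub_feasible H m J nj F ch cj Y \<alpha> s w2 d2"
    using feas w2ok d2ok unfolding sub_feasible_def by blast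
  have le: "sub_obj H m J nj r \<mu> \<gamma> Y \<alpha> s w d \<le> sub_obj H m J nj r \<mu> \<gamma> Y \<alpha> s w2 d2"
    using opt feas2 unfolding sub_optimal_def by blast
  have lw2: "l1 (w2 k) = negl1 (\<Sum>i=1..m. \<alpha> k i *\<^sub>R ch k (Y i k))" for k
    unfolding l1_def negl1_def w2_def by simp
  have wge: "l1 (w2 k) \<le> l1 (w k)" if "k \<in> {1..H-1}" for k
    unfolding l1_def
  proof (intro sum_mono)
    fix l :: 'nh
    have a: "0 \<le> w k $ l" "0 \<le> (\<Sum>i=1..m. \<alpha> k i *\<^sub>R ch k (Y i k)) $ l + w k $ l"
      using w0 that by blast+
    have b: "w2 k $ l = max 0 (- ((\<Sum>i=1..m. \<alpha> k i *\<^sub>R ch k (Y i k)) $ l))" unfolding w2_def by simp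
    show "\<bar>w2 k $ l\<bar> \<le> \<bar>w k $ l\<bar>" unfolding b using a by arith
  qed
  have dge: "(\<Sum>k=1..H-1. \<Sum>l<nj j. \<bar>d2 k j l\<bar>) \<le> (\<Sum>k=1..H-1. \<Sum>l<nj j. \<bar>d k j l\<bar>)" if "j \<in> {1..J}" for j
    unfolding d2_def
  proof (intro sum_mono)
    fix k l assume k: "k \<in> {1..H-1}" and l: "l \<in> {..<nj j}"
    have a: "0 \<le> d k j l" "0 \<le> (\<Sum>i=1..m. \<alpha> k i * cj j k (Y i k) l) + d k j l"
      using d0 k l that by auto
    show "\<bar>max 0 (- (\<Sum>i=1..m. \<alpha> k i * cj j k (Y i k) l))\<bar> \<le> \<bar>d k j l\<bar>" using a by arith
  qed
  have A: "\<mu> * (\<Sum>k=1..H-1. l1 (s k) + l1 (w2 k)) \<le> \<mu> * (\<Sum>k=1..H-1. l1 (s k) + l1 (w k))"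
    using mu wge by (intro mult_left_mono sum_mono) auto
  have B: "(\<Sum>j=1..J. \<gamma> j * (\<Sum>k=1..H-1. \<Sum>l<nj j. \<bar>d2 k j l\<bar>)) \<le> (\<Sum>j=1..J. \<gamma> j * (\<Sum>k=1..H-1. \<Sum>l<nj j. \<bar>d k j l\<bar>))"
  proof (rule sum_mono)
    fix j assume j: "j \<in> {1..J}"
    show "\<gamma> j * (\<Sum>k=1..H-1. \<Sum>l<nj j. \<bar>d2 k j l\<bar>) \<le> \<gamma> j * (\<Sum>k=1..H-1. \<Sum>l<nj j. \<bar>d k j l\<bar>)"
      by (rule mult_left_mono[OF dge[OF j]]) (use ga j in auto)
  qed
  have C: "\<mu> * (\<Sum>k=1..H-1. l1 (s k) + l1 (w k)) + (\<Sum>j=1..J. \<gamma> j * (\<Sum>k=1..H-1. \<Sum>l<nj j. \<bar>d k j l\<bar>))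
      \<le> \<mu> * (\<Sum>k=1..H-1. l1 (s k) + l1 (w2 k)) + (\<Sum>j=1..J. \<gamma> j * (\<Sum>k=1..H-1. \<Sum>l<nj j. \<bar>d2 k j l\<bar>))"
    using le unfolding sub_obj_def by simp
  have "\<mu> * (\<Sum>k=1..H-1. l1 (s k) + l1 (w k)) + (\<Sum>j=1..J. \<gamma> j * (\<Sum>k=1..H-1. \<Sum>l<nj j. \<bar>d k j l\<bar>))
      = \<mu> * (\<Sum>k=1..H-1. l1 (s k) + l1 (w2 k)) + (\<Sum>j=1..J. \<gamma> j * (\<Sum>k=1..H-1. \<Sum>l<nj j. \<bar>d2 k j l\<bar>))"
    using A B C by linarith
  also have "\<dots> = \<mu> * (\<Sum>k=1..H-1. l1 (s k) + negl1 (\<Sum>i=1..m. \<alpha> k i *\<^sub>R ch k (Y i k)))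
      + (\<Sum>j=1..J. \<gamma> j * (\<Sum>k=1..H-1. \<Sum>l<nj j. max 0 (- (\<Sum>i=1..m. \<alpha> k i * cj j k (Y i k) l))))"
    unfolding lw2 d2_def by simp
  finally show ?thesis .
qed

theorem mainTheorem3:
  fixes H m J :: nat and nj :: "nat \<Rightarrow> nat"
    and F :: "('nx::finite,'nu::finite) stage \<Rightarrow> real^'nx"
    and r :: "nat \<Rightarrow> ('nx,'nu) stage \<Rightarrow> real^'nr::finite"
    and ch :: "nat \<Rightarrow> ('nx,'nu) stage \<Rightarrow> real^'nh::finite"
    and cj :: "nat \<Rightarrow> nat \<Rightarrow> ('nx,'nu) stage \<Rightarrow> (nat \<Rightarrow> real)"
    and z0 :: "('nx,'nu) traj" and \<Delta>0 \<mu>0 :: real and \<gamma>0 :: "nat \<Rightarrow> real"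
    and \<beta>exp \<beta>con \<Delta>min \<Delta>max \<tau>feas \<tau>viol \<rho>\<mu> \<rho>\<gamma> \<mu>max :: real
    and \<tau> \<gamma>max :: "nat \<Rightarrow> real"
    and Lr LF Lc R \<kappa> :: real
    and zs :: "nat \<Rightarrow> ('nx,'nu) traj" and \<Delta>s \<mu>s :: "nat \<Rightarrow> real"
    and \<gamma>s :: "nat \<Rightarrow> nat \<Rightarrow> real" and Ys :: "nat \<Rightarrow> nat \<Rightarrow> ('nx,'nu) traj"
    and \<alpha>s :: "nat \<Rightarrow> nat \<Rightarrow> nat \<Rightarrow> real" and ss :: "nat \<Rightarrow> nat \<Rightarrow> real^'nx"
    and ws :: "nat \<Rightarrow> nat \<Rightarrow> real^'nh" and ds :: "nat \<Rightarrow> nat \<Rightarrow> nat \<Rightarrow> nat \<Rightarrow> real"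
  assumes H: "2 \<le> H" and m: "1 \<le> m" and nj: "\<forall>j\<in>{1..J}. 1 \<le> nj j"
    and params: "1 < \<beta>exp" "0 < \<beta>con" "\<beta>con < 1" "0 < \<Delta>min" "\<Delta>min \<le> \<Delta>max"
      "0 < \<tau>feas" "\<tau>feas < \<tau>viol" "\<forall>j\<in>{1..J}. 0 < \<tau> j" "1 < \<rho>\<mu>" "1 < \<rho>\<gamma>"
    and init: "0 < \<Delta>0" "0 < \<mu>0" "\<forall>j\<in>{1..J}. 0 < \<gamma>0 j"
    \<comment> \<open>(A1) Lipschitz continuity\<close>
    and A1_r: "\<forall>k\<in>{1..H}. Lr-lipschitz_on UNIV (r k)"
    and A1_F: "0 \<le> LF" "\<forall>p q. l1 (F p - F q) \<le> LF * dist p q"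
    and A1_c: "0 \<le> Lc" "\<forall>k\<in>{1..H}. \<forall>p q.
        l1 (ch k p - ch k q) + (\<Sum>j=1..J. \<Sum>l<nj j. \<bar>cj j k p l - cj j k q l\<bar>) \<le> Lc * dist p q"
    \<comment> \<open>(A2) compact level sets with bounded residuals\<close>
    and A2: "\<forall>\<mu> \<gamma>. 0 < \<mu> \<and> \<mu> \<le> \<mu>max \<and> (\<forall>j\<in>{1..J}. 0 < \<gamma> j \<and> \<gamma> j \<le> \<gamma>max j) \<longrightarrow>
        (let Lset = {z. (\<forall>k. k \<notin> {1..H} \<longrightarrow> z k = 0) \<and>
                         phi H J nj F r ch cj \<mu> \<gamma> z \<le> phi H J nj F r ch cj \<mu> \<gamma> z0}
         in compact Lset \<and> (\<forall>z\<in>Lset. \<forall>k\<in>{1..H}. norm (r k (z k)) \<le> R))"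
    \<comment> \<open>(A2) the bound R is used for all residuals evaluated in the analysis\<close>
    and A2_R: "\<forall>t. \<forall>i\<in>{1..m}. \<forall>k\<in>{1..H}. norm (r k (Ys t i k)) \<le> R"
              "\<forall>t. \<forall>k\<in>{1..H}. norm (r k (zs (Suc t) k)) \<le> R"
    \<comment> \<open>(A3) sampling conditions\<close>
    and \<kappa>: "0 < \<kappa>"
    and A3: "\<forall>t. (\<forall>i\<in>{1..m}. traj_norm H (\<lambda>k. Ys t i k - zs t k) \<le> \<Delta>s t) \<and>
                (\<exists>i\<in>{1..m}. \<forall>k\<in>{1..H}. Ys t i k = zs t k) \<and>
                (\<forall>dd. traj_norm H dd = 1 \<longrightarrow>
                   (\<exists>i\<in>{1..m}. \<kappa> * \<Delta>s t \<le> traj_inner H (\<lambda>k. Ys t i k - zs t k) dd))"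
    and run: "atbm_run H m J nj F r ch cj z0 \<Delta>0 \<mu>0 \<gamma>0
                \<beta>exp \<beta>con \<Delta>min \<Delta>max \<tau>feas \<tau>viol \<tau> \<rho>\<mu> \<rho>\<gamma> \<mu>max \<gamma>max
                zs \<Delta>s \<mu>s \<gamma>s Ys \<alpha>s ss ws ds"
  shows "\<forall>t. \<bar>phi H J nj F r ch cj (\<mu>s t) (\<gamma>s t) (zs (Suc t))
              - sub_obj H m J nj r (\<mu>s t) (\<gamma>s t) (Ys t) (\<alpha>s t) (ss t) (ws t) (ds t)\<bar>
           \<le> 2 * (2 * real H * R * Lr + real (H - 1) * \<mu>s t * (1 + LF + Lc)
                  + real (H - 1) * Lc * (\<Sum>j=1..J. \<gamma>s t j)) * \<Delta>s t"
proof (intro allI)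
  fix t
  let ?\<alpha> = "\<alpha>s t" and ?Y = "Ys t" and ?z = "zs t" and ?zp = "zs (Suc t)" and ?\<Delta> = "\<Delta>s t"
    and ?\<mu> = "\<mu>s t" and ?\<gamma> = "\<gamma>s t" and ?s = "ss t" and ?w = "ws t" and ?d = "ds t"
  have opt: "sub_optimal H m J nj F r ch cj ?\<mu> ?\<gamma> ?Y ?\<alpha> ?s ?w ?d"
    and zpdef: "?zp = recover m ?Y ?\<alpha>"
    using run unfolding atbm_run_def by (blast, blast)
  have feas: "sub_feasible H m J nj F ch cj ?Y ?\<alpha> ?s ?w ?d" using opt unfolding sub_optimal_def by blast
  have \<alpha>k: "\<forall>k\<in>{1..H}. (\<forall>i\<in>{1..m}. 0 \<le> ?\<alpha> k i) \<and> (\<Sum>i=1..m. ?\<alpha> k i) = 1"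
    and dyn: "\<forall>k\<in>{1..H-1}. (\<Sum>i=1..m. ?\<alpha> k i *\<^sub>R F (?Y i k))
                      = (\<Sum>i=1..m. ?\<alpha> (k+1) i *\<^sub>R fst (?Y i (k+1))) + ?s k"
    using feas unfolding sub_feasible_def by blast+
  have mu0: "0 \<le> ?\<mu>" by (rule opt_mu_nonneg[OF opt H])
  have ga0: "\<forall>j\<in>{1..J}. 0 \<le> ?\<gamma> j" using opt_gamma_nonneg[OF opt H nj] by blast
  have Lr0: "0 \<le> Lr" proof -
    have "1 \<in> {1..H}" using H by simp
    then show ?thesis using A1_r lipschitz_on_nonneg by blast
  qed
  have dY: "norm (?Y i k - ?z k) \<le> ?\<Delta>" if "i \<in> {1..m}" "k \<in> {1..H}" for i k
  proof -
    have "traj_norm H (\<lambda>k. ?Y i k - ?z k) \<le> ?\<Delta>" using A3 that by blast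
    with stage_le_traj[OF that(2), of "\<lambda>k. ?Y i k - ?z k"] show ?thesis by simp
  qed
  have D0: "0 \<le> ?\<Delta>" using dY[of 1 1] m H by (meson atLeastAtMost_iff le_add2 norm_ge_zero order.trans one_le_numeral order_refl)
  have zpk: "?zp k = (\<Sum>i=1..m. ?\<alpha> k i *\<^sub>R ?Y i k)" for k
    using zpdef unfolding recover_def by simp
  have dzp: "norm (?zp k - ?z k) \<le> ?\<Delta>" if k: "k \<in> {1..H}" for k
  proof -
    have "?z k - ?zp k = (\<Sum>i=1..m. ?\<alpha> k i *\<^sub>R (?z k - ?Y i k))"
      unfolding zpk by (rule conv_sub) (use \<alpha>k k in blast)
    moreover have "norm (\<Sum>i=1..m. ?\<alpha> k i *\<^sub>R (?z k - ?Y i k)) \<le> ?\<Delta>"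
      by (rule conv_norm) (use \<alpha>k k dY in \<open>auto simp: norm_minus_commute\<close>)
    ultimately show ?thesis by (simp add: norm_minus_commute)
  qed
  have dist2: "dist (?zp k) (?Y i k) \<le> 2 * ?\<Delta>" if "i \<in> {1..m}" "k \<in> {1..H}" for i k
  proof -
    have "dist (?zp k) (?Y i k) \<le> dist (?zp k) (?z k) + dist (?z k) (?Y i k)" by (rule dist_triangle)
    also have "\<dots> \<le> ?\<Delta> + ?\<Delta>" using dzp[OF that(2)] dY[OF that]
      by (simp add: dist_norm norm_minus_commute add_mono)
    finally show ?thesis by simp
  qed
  have bndA: "\<bar>(norm (r k (?zp k)))\<^sup>2 - (norm (\<Sum>i=1..m. ?\<alpha> k i *\<^sub>R r k (?Y i k)))\<^sup>2\<bar> \<le> 4 * R * Lr * ?\<Delta>"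
    if k: "k \<in> {1..H}" for k
  proof -
    define a where "a = norm (r k (?zp k))"
    define b where "b = norm (\<Sum>i=1..m. ?\<alpha> k i *\<^sub>R r k (?Y i k))"
    have aR: "a \<le> R" unfolding a_def using A2_R(2) k by blast
    have bR: "b \<le> R" unfolding b_def
      by (rule conv_norm) (use \<alpha>k k A2_R(1) in auto)
    have a0: "0 \<le> a" "0 \<le> b" unfolding a_def b_def by simp_all
    have "\<bar>a - b\<bar> \<le> norm (r k (?zp k) - (\<Sum>i=1..m. ?\<alpha> k i *\<^sub>R r k (?Y i k)))"
      unfolding a_def b_def by (rule norm_triangle_ineq3)
    also have "\<dots> = norm (\<Sum>i=1..m. ?\<alpha> k i *\<^sub>R (r k (?zp k) - r k (?Y i k)))"
      by (subst conv_sub) (use \<alpha>k k in auto)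
    also have "\<dots> \<le> Lr * (2 * ?\<Delta>)"
    proof (rule conv_norm)
      show "\<forall>i\<in>{1..m}. norm (r k (?zp k) - r k (?Y i k)) \<le> Lr * (2 * ?\<Delta>)"
      proof
        fix i assume i: "i \<in> {1..m}"
        have "norm (r k (?zp k) - r k (?Y i k)) \<le> Lr * dist (?zp k) (?Y i k)"
          using lipschitz_onD[of Lr UNIV "r k" "?zp k" "?Y i k"] A1_r k by (simp add: dist_norm)
        also have "\<dots> \<le> Lr * (2 * ?\<Delta>)" using dist2[OF i k] Lr0 by (rule mult_left_mono)
        finally show "norm (r k (?zp k) - r k (?Y i k)) \<le> Lr * (2 * ?\<Delta>)" .
      qed
    qed (use \<alpha>k k in auto)
    finally have ab: "\<bar>a - b\<bar> \<le> Lr * (2 * ?\<Delta>)" .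
    have "\<bar>a\<^sup>2 - b\<^sup>2\<bar> = \<bar>a - b\<bar> * (a + b)" proof -
      have "a\<^sup>2 - b\<^sup>2 = (a - b) * (a + b)" by (simp add: power2_eq_square algebra_simps)
      then show ?thesis using a0 by (simp add: abs_mult)
    qed
    also have "\<dots> \<le> (Lr * (2 * ?\<Delta>)) * (2 * R)"
      using ab aR bR a0 by (intro mult_mono) auto
    finally show ?thesis unfolding a_def b_def by (simp add: algebra_simps)
  qed
  have bndP: "\<bar>(l1 (fst (?zp (k+1)) - F (?zp k)) + negl1 (ch k (?zp k)))
             - (l1 (?s k) + negl1 (\<Sum>i=1..m. ?\<alpha> k i *\<^sub>R ch k (?Y i k)))\<bar> \<le> 2 * LF * ?\<Delta> + 2 * Lc * ?\<Delta>"
    if k: "k \<in> {1..H-1}" for k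
  proof -
    have kH: "k \<in> {1..H}" using k by auto
    define u where "u = (\<Sum>i=1..m. ?\<alpha> k i *\<^sub>R F (?Y i k)) - F (?zp k)"
    have fz: "fst (?zp (k+1)) = (\<Sum>i=1..m. ?\<alpha> (k+1) i *\<^sub>R fst (?Y i (k+1)))"
      unfolding zpk by (simp add: fst_sum)
    have eq1: "fst (?zp (k+1)) - F (?zp k) = u - ?s k"
      unfolding fz u_def using dyn k by (simp add: algebra_simps)
    have "\<bar>l1 (u - ?s k) - l1 (- ?s k)\<bar> \<le> l1 (u - ?s k - - ?s k)" by (rule l1_diff)
    then have e1: "\<bar>l1 (fst (?zp (k+1)) - F (?zp k)) - l1 (?s k)\<bar> \<le> l1 u"
      unfolding eq1 l1_minus by simp
    have "l1 u = l1 (F (?zp k) - (\<Sum>i=1..m. ?\<alpha> k i *\<^sub>R F (?Y i k)))" unfolding u_def by (rule l1_commute)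
    also have "\<dots> = l1 (\<Sum>i=1..m. ?\<alpha> k i *\<^sub>R (F (?zp k) - F (?Y i k)))"
      by (subst conv_sub) (use \<alpha>k kH in auto)
    also have "\<dots> \<le> LF * (2 * ?\<Delta>)"
    proof (rule conv_l1)
      show "\<forall>i\<in>{1..m}. l1 (F (?zp k) - F (?Y i k)) \<le> LF * (2 * ?\<Delta>)"
      proof
        fix i assume i: "i \<in> {1..m}"
        have "l1 (F (?zp k) - F (?Y i k)) \<le> LF * dist (?zp k) (?Y i k)" using A1_F(2) by blast
        also have "\<dots> \<le> LF * (2 * ?\<Delta>)" using dist2[OF i kH] A1_F(1) by (rule mult_left_mono)
        finally show "l1 (F (?zp k) - F (?Y i k)) \<le> LF * (2 * ?\<Delta>)" .
      qed
    qed (use \<alpha>k kH in auto)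
    finally have e2: "l1 u \<le> LF * (2 * ?\<Delta>)" .
    have "\<bar>negl1 (ch k (?zp k)) - negl1 (\<Sum>i=1..m. ?\<alpha> k i *\<^sub>R ch k (?Y i k))\<bar>
        \<le> l1 (ch k (?zp k) - (\<Sum>i=1..m. ?\<alpha> k i *\<^sub>R ch k (?Y i k)))" by (rule negl1_diff)
    also have "\<dots> = l1 (\<Sum>i=1..m. ?\<alpha> k i *\<^sub>R (ch k (?zp k) - ch k (?Y i k)))"
      by (subst conv_sub) (use \<alpha>k kH in auto)
    also have "\<dots> \<le> Lc * (2 * ?\<Delta>)"
    proof (rule conv_l1)
      show "\<forall>i\<in>{1..m}. l1 (ch k (?zp k) - ch k (?Y i k)) \<le> Lc * (2 * ?\<Delta>)"
      proof
        fix i assume i: "i \<in> {1..m}"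
        have s0: "0 \<le> (\<Sum>j=1..J. \<Sum>l<nj j. \<bar>cj j k (?zp k) l - cj j k (?Y i k) l\<bar>)"
          by (intro sum_nonneg) auto
        have "l1 (ch k (?zp k) - ch k (?Y i k)) \<le> Lc * dist (?zp k) (?Y i k)"
        proof -
          have "l1 (ch k (?zp k) - ch k (?Y i k)) + (\<Sum>j=1..J. \<Sum>l<nj j. \<bar>cj j k (?zp k) l - cj j k (?Y i k) l\<bar>)
              \<le> Lc * dist (?zp k) (?Y i k)" using A1_c(2) kH by blast
          then show ?thesis using s0 by linarith
        qed
        also have "\<dots> \<le> Lc * (2 * ?\<Delta>)" using dist2[OF i kH] A1_c(1) by (rule mult_left_mono)
        finally show "l1 (ch k (?zp k) - ch k (?Y i k)) \<le> Lc * (2 * ?\<Delta>)" .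
      qed
    qed (use \<alpha>k kH in auto)
    finally have e3: "\<bar>negl1 (ch k (?zp k)) - negl1 (\<Sum>i=1..m. ?\<alpha> k i *\<^sub>R ch k (?Y i k))\<bar> \<le> Lc * (2 * ?\<Delta>)" .
    show ?thesis using e1 e2 e3 by linarith
  qed
  have bndQ: "\<bar>(\<Sum>l<nj j. max 0 (- cj j k (?zp k) l))
             - (\<Sum>l<nj j. max 0 (- (\<Sum>i=1..m. ?\<alpha> k i * cj j k (?Y i k) l)))\<bar> \<le> 2 * Lc * ?\<Delta>"
    if k: "k \<in> {1..H-1}" and j: "j \<in> {1..J}" for k j
  proof -
    have kH: "k \<in> {1..H}" using k by auto
    have "\<bar>(\<Sum>l<nj j. max 0 (- cj j k (?zp k) l))
             - (\<Sum>l<nj j. max 0 (- (\<Sum>i=1..m. ?\<alpha> k i * cj j k (?Y i k) l)))\<bar>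
        = \<bar>\<Sum>l<nj j. max 0 (- cj j k (?zp k) l) - max 0 (- (\<Sum>i=1..m. ?\<alpha> k i * cj j k (?Y i k) l))\<bar>"
      by (simp add: sum_subtractf)
    also have "\<dots> \<le> (\<Sum>l<nj j. \<bar>max 0 (- cj j k (?zp k) l) - max 0 (- (\<Sum>i=1..m. ?\<alpha> k i * cj j k (?Y i k) l))\<bar>)"
      by (rule sum_abs)
    also have "\<dots> \<le> (\<Sum>l<nj j. \<bar>cj j k (?zp k) l - (\<Sum>i=1..m. ?\<alpha> k i * cj j k (?Y i k) l)\<bar>)"
      by (rule sum_mono) arith
    also have "\<dots> \<le> Lc * (2 * ?\<Delta>)"
    proof (rule conv_scalar)
      show "\<forall>i\<in>{1..m}. (\<Sum>l<nj j. \<bar>cj j k (?zp k) l - cj j k (?Y i k) l\<bar>) \<le> Lc * (2 * ?\<Delta>)"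
      proof
        fix i assume i: "i \<in> {1..m}"
        have "(\<Sum>l<nj j. \<bar>cj j k (?zp k) l - cj j k (?Y i k) l\<bar>)
            \<le> (\<Sum>j=1..J. \<Sum>l<nj j. \<bar>cj j k (?zp k) l - cj j k (?Y i k) l\<bar>)"
          by (rule member_le_sum) (use j in \<open>auto intro: sum_nonneg\<close>)
        also have "\<dots> \<le> l1 (ch k (?zp k) - ch k (?Y i k)) + (\<Sum>j=1..J. \<Sum>l<nj j. \<bar>cj j k (?zp k) l - cj j k (?Y i k) l\<bar>)"
          using l1_nonneg by simp
        also have "\<dots> \<le> Lc * dist (?zp k) (?Y i k)" using A1_c(2) kH by blast
        also have "\<dots> \<le> Lc * (2 * ?\<Delta>)" using dist2[OF i kH] A1_c(1) by (rule mult_left_mono)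
        finally show "(\<Sum>l<nj j. \<bar>cj j k (?zp k) l - cj j k (?Y i k) l\<bar>) \<le> Lc * (2 * ?\<Delta>)" .
      qed
    qed (use \<alpha>k kH in auto)
    finally show ?thesis by simp
  qed
  define A where "A = (\<lambda>k. (norm (r k (?zp k)))\<^sup>2)"
  define A' where "A' = (\<lambda>k. (norm (\<Sum>i=1..m. ?\<alpha> k i *\<^sub>R r k (?Y i k)))\<^sup>2)"
  define P where "P = (\<lambda>k. l1 (fst (?zp (k+1)) - F (?zp k)) + negl1 (ch k (?zp k)))"
  define P' where "P' = (\<lambda>k. l1 (?s k) + negl1 (\<Sum>i=1..m. ?\<alpha> k i *\<^sub>R ch k (?Y i k)))"
  define Q where "Q = (\<lambda>j k. \<Sum>l<nj j. max 0 (- cj j k (?zp k) l))"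
  define Q' where "Q' = (\<lambda>j k. \<Sum>l<nj j. max 0 (- (\<Sum>i=1..m. ?\<alpha> k i * cj j k (?Y i k) l)))"
  have phi_eq: "phi H J nj F r ch cj ?\<mu> ?\<gamma> ?zp = (\<Sum>k=1..H. A k) + ?\<mu> * (\<Sum>k=1..H-1. P k) + (\<Sum>j=1..J. ?\<gamma> j * (\<Sum>k=1..H-1. Q j k))"
    unfolding phi_def A_def P_def Q_def by simp
  have sub_eq: "sub_obj H m J nj r ?\<mu> ?\<gamma> ?Y ?\<alpha> ?s ?w ?d = (\<Sum>k=1..H. A' k) + ?\<mu> * (\<Sum>k=1..H-1. P' k) + (\<Sum>j=1..J. ?\<gamma> j * (\<Sum>k=1..H-1. Q' j k))"
    using opt_eq[OF opt H nj] unfolding sub_obj_def A'_def P'_def Q'_def by (simp add: add.assoc)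
  have diff: "phi H J nj F r ch cj ?\<mu> ?\<gamma> ?zp - sub_obj H m J nj r ?\<mu> ?\<gamma> ?Y ?\<alpha> ?s ?w ?d
     = (\<Sum>k=1..H. A k - A' k) + ?\<mu> * (\<Sum>k=1..H-1. P k - P' k) + (\<Sum>j=1..J. ?\<gamma> j * (\<Sum>k=1..H-1. Q j k - Q' j k))"
    unfolding phi_eq sub_eq by (simp add: sum_subtractf algebra_simps)
  have b1: "\<bar>\<Sum>k=1..H. A k - A' k\<bar> \<le> real H * (4 * R * Lr * ?\<Delta>)"
  proof -
    have "\<bar>\<Sum>k=1..H. A k - A' k\<bar> \<le> (\<Sum>k=1..H. \<bar>A k - A' k\<bar>)" by (rule sum_abs)
    also have "\<dots> \<le> (\<Sum>k=1..H. 4 * R * Lr * ?\<Delta>)" unfolding A_def A'_def by (rule sum_mono) (rule bndA)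
    finally show ?thesis by simp
  qed
  have b2: "\<bar>?\<mu> * (\<Sum>k=1..H-1. P k - P' k)\<bar> \<le> ?\<mu> * (real (H - 1) * (2 * LF * ?\<Delta> + 2 * Lc * ?\<Delta>))"
  proof -
    have "\<bar>\<Sum>k=1..H-1. P k - P' k\<bar> \<le> (\<Sum>k=1..H-1. \<bar>P k - P' k\<bar>)" by (rule sum_abs)
    also have "\<dots> \<le> (\<Sum>k=1..H-1. 2 * LF * ?\<Delta> + 2 * Lc * ?\<Delta>)" unfolding P_def P'_def by (rule sum_mono) (rule bndP)
    finally have "\<bar>\<Sum>k=1..H-1. P k - P' k\<bar> \<le> real (H - 1) * (2 * LF * ?\<Delta> + 2 * Lc * ?\<Delta>)" by simp
    then show ?thesis using mu0 by (simp add: abs_mult mult_left_mono)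
  qed
  have b3: "\<bar>\<Sum>j=1..J. ?\<gamma> j * (\<Sum>k=1..H-1. Q j k - Q' j k)\<bar> \<le> (\<Sum>j=1..J. ?\<gamma> j * (real (H - 1) * (2 * Lc * ?\<Delta>)))"
  proof -
    have "\<bar>\<Sum>j=1..J. ?\<gamma> j * (\<Sum>k=1..H-1. Q j k - Q' j k)\<bar> \<le> (\<Sum>j=1..J. \<bar>?\<gamma> j * (\<Sum>k=1..H-1. Q j k - Q' j k)\<bar>)" by (rule sum_abs)
    also have "\<dots> \<le> (\<Sum>j=1..J. ?\<gamma> j * (real (H - 1) * (2 * Lc * ?\<Delta>)))"
    proof (rule sum_mono)
      fix j assume j: "j \<in> {1..J}"
      have "\<bar>\<Sum>k=1..H-1. Q j k - Q' j k\<bar> \<le> (\<Sum>k=1..H-1. \<bar>Q j k - Q' j k\<bar>)" by (rule sum_abs)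
      also have "\<dots> \<le> (\<Sum>k=1..H-1. 2 * Lc * ?\<Delta>)" unfolding Q_def Q'_def by (rule sum_mono) (rule bndQ[OF _ j])
      finally have "\<bar>\<Sum>k=1..H-1. Q j k - Q' j k\<bar> \<le> real (H - 1) * (2 * Lc * ?\<Delta>)" by simp
      then show "\<bar>?\<gamma> j * (\<Sum>k=1..H-1. Q j k - Q' j k)\<bar> \<le> ?\<gamma> j * (real (H - 1) * (2 * Lc * ?\<Delta>))"
        using ga0 j by (simp add: abs_mult mult_left_mono)
    qed
    finally show ?thesis .
  qed
  have s3: "(\<Sum>j=1..J. ?\<gamma> j * (real (H - 1) * (2 * Lc * ?\<Delta>))) = real (H - 1) * (2 * Lc * ?\<Delta>) * (\<Sum>j=1..J. ?\<gamma> j)"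
    by (simp add: sum_distrib_left sum_distrib_right algebra_simps)
  have extra: "0 \<le> real (H - 1) * ?\<mu> * ?\<Delta>" using mu0 D0 by simp
  have tot: "\<bar>phi H J nj F r ch cj ?\<mu> ?\<gamma> ?zp - sub_obj H m J nj r ?\<mu> ?\<gamma> ?Y ?\<alpha> ?s ?w ?d\<bar>
      \<le> real H * (4 * R * Lr * ?\<Delta>) + ?\<mu> * (real (H - 1) * (2 * LF * ?\<Delta> + 2 * Lc * ?\<Delta>))
        + real (H - 1) * (2 * Lc * ?\<Delta>) * (\<Sum>j=1..J. ?\<gamma> j)"
    unfolding diff using b1 b2 b3 s3 by linarith
  have rhs: "2 * (2 * real H * R * Lr + real (H - 1) * ?\<mu> * (1 + LF + Lc)
                  + real (H - 1) * Lc * (\<Sum>j=1..J. ?\<gamma> j)) * ?\<Delta>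
     = real H * (4 * R * Lr * ?\<Delta>) + ?\<mu> * (real (H - 1) * (2 * LF * ?\<Delta> + 2 * Lc * ?\<Delta>))
        + real (H - 1) * (2 * Lc * ?\<Delta>) * (\<Sum>j=1..J. ?\<gamma> j) + 2 * (real (H - 1) * ?\<mu> * ?\<Delta>)"
    by (simp add: algebra_simps)
  show "\<bar>phi H J nj F r ch cj ?\<mu> ?\<gamma> ?zp - sub_obj H m J nj r ?\<mu> ?\<gamma> ?Y ?\<alpha> ?s ?w ?d\<bar>
           \<le> 2 * (2 * real H * R * Lr + real (H - 1) * ?\<mu> * (1 + LF + Lc)
                  + real (H - 1) * Lc * (\<Sum>j=1..J. ?\<gamma> j)) * ?\<Delta>"
    unfolding rhs using tot extra by linarith
qed

end
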